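(* Let $G$ be a connected nontrivial graph with $m$ vertices and let $n\geq2$. If $\min\{(3n-2)\lambda(G),\ m+2e(G)\}\geq \min\{2\xi(G)+4,\ 5\delta(G)+1\}$, then $G\boxtimes P_n$ is maximally restricted edge-connected, i.e. $\lambda'(G\boxtimes P_n)=\xi(G\boxtimes P_n)$.
   Context: All graphs are finite, simple and undirected; "nontrivial" means having at least two vertices. $P_n$ denotes the path on $n$ vertices. For a graph $G$: $e(G)=|E(G)|$; $\delta(G)$ is the minimum degree; $\lambda(G)$ is the edge-connectivity; for an edge $uv$, its edge-degree is $d_G(u)+d_G(v)-2$, and $\xi(G)$ is the minimum edge-degree over all edges of $G$. A restricted edge-cut of a connected graph $G$ is a set $S\subseteq E(G)$ such that $G-S$ is disconnected and every component of $G-S$ has at least $2$ vertices; $\lambda'(G)$ is the minimum cardinality of a restricted edge-cut. A graph $G$ is maximally restricted edge-connected if $\lambda'(G)=\xi(G)$. The strong product $G\boxtimes H$ has vertex set $V(G)\times V(H)$, with $(x_1,y_1)$ and $(x_2,y_2)$ adjacent iff either $x_1=x_2$ and $y_1y_2\in E(H)$, or $y_1=y_2$ and $x_1x_2\in E(G)$, or $x_1x_2\in E(G)$ and $y_1y_2\in E(H)$. (One has $\xi(G\boxtimes P_n)=\min\{2\xi(G)+4,5\delta(G)+1\}$.) *)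

theory Defs
  imports Main
begin

type_synonym 'a graph = "'a set \<times> 'a set set"

definition verts :: "'a graph \<Rightarrow> 'a set" where "verts G = fst G"
definition edges :: "'a graph \<Rightarrow> 'a set set" where "edges G = snd G"

definition simple_graph :: "'a graph \<Rightarrow> bool" where
  "simple_graph G \<longleftrightarrow> finite (verts G) \<and> (\<forall>e\<in>edges G. card e = 2 \<and> e \<subseteq> verts G)"

definition adj :: "'a graph \<Rightarrow> 'a \<Rightarrow> 'a \<Rightarrow> bool" where
  "adj G u v \<longleftrightarrow> {u, v} \<in> edges G"

definition reachable :: "'a graph \<Rightarrow> 'a \<Rightarrow> 'a \<Rightarrow> bool" where
  "reachable G u v \<longleftrightarrow> u \<in> verts G \<and> v \<in> verts G \<and> (adj G)\<^sup>*\<^sup>* u v"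

definition connected :: "'a graph \<Rightarrow> bool" where
  "connected G \<longleftrightarrow> verts G \<noteq> {} \<and> (\<forall>u\<in>verts G. \<forall>v\<in>verts G. reachable G u v)"

definition nontrivial :: "'a graph \<Rightarrow> bool" where
  "nontrivial G \<longleftrightarrow> card (verts G) \<ge> 2"

definition component :: "'a graph \<Rightarrow> 'a \<Rightarrow> 'a set" where
  "component G v = {u. reachable G v u}"

definition edge_delete :: "'a graph \<Rightarrow> 'a set set \<Rightarrow> 'a graph" where
  "edge_delete G S = (verts G, edges G - S)"

definition num_edges :: "'a graph \<Rightarrow> nat" where
  "num_edges G = card (edges G)"

definition degree :: "'a graph \<Rightarrow> 'a \<Rightarrow> nat" where
  "degree G v = card {e \<in> edges G. v \<in> e}"

definition min_degree :: "'a graph \<Rightarrow> nat" where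
  "min_degree G = Min (degree G ` verts G)"

definition min_edge_degree :: "'a graph \<Rightarrow> nat" where
  "min_edge_degree G = Min {degree G u + degree G v - 2 | u v. {u, v} \<in> edges G \<and> u \<noteq> v}"

definition edge_cut :: "'a graph \<Rightarrow> 'a set set \<Rightarrow> bool" where
  "edge_cut G S \<longleftrightarrow> S \<subseteq> edges G \<and> \<not> connected (edge_delete G S)"

definition edge_connectivity :: "'a graph \<Rightarrow> nat" where
  "edge_connectivity G = Inf {card S | S. edge_cut G S}"

definition restricted_edge_cut :: "'a graph \<Rightarrow> 'a set set \<Rightarrow> bool" where
  "restricted_edge_cut G S \<longleftrightarrow> edge_cut G S \<and>
     (\<forall>v\<in>verts G. card (component (edge_delete G S) v) \<ge> 2)"

definition restricted_edge_connectivity :: "'a graph \<Rightarrow> nat" where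
  "restricted_edge_connectivity G = Inf {card S | S. restricted_edge_cut G S}"

definition maximally_restricted_edge_connected :: "'a graph \<Rightarrow> bool" where
  "maximally_restricted_edge_connected G \<longleftrightarrow>
     restricted_edge_connectivity G = min_edge_degree G"

definition strong_product :: "'a graph \<Rightarrow> 'b graph \<Rightarrow> ('a \<times> 'b) graph" where
  "strong_product G H = (verts G \<times> verts H,
     {{(x1, y1), (x2, y2)} | x1 y1 x2 y2.
        x1 \<in> verts G \<and> x2 \<in> verts G \<and> y1 \<in> verts H \<and> y2 \<in> verts H \<and>
        ((x1 = x2 \<and> {y1, y2} \<in> edges H) \<or> (y1 = y2 \<and> {x1, x2} \<in> edges G) \<or>
         ({x1, x2} \<in> edges G \<and> {y1, y2} \<in> edges H))})"

definition path_graph :: "nat \<Rightarrow> nat graph" where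
  "path_graph n = ({0..<n}, {{i, Suc i} | i. Suc i < n})"

end

theory Submission
  imports Defs
begin
definition nb :: "nat \<Rightarrow> nat \<Rightarrow> bool" where
  "nb i j \<longleftrightarrow> j = Suc i \<or> i = Suc j"

definition hadj :: "'a graph \<Rightarrow> nat \<Rightarrow> ('a \<times> nat) \<Rightarrow> ('a \<times> nat) \<Rightarrow> bool" where
  "hadj G n p q \<longleftrightarrow> fst p \<in> verts G \<and> fst q \<in> verts G \<and> snd p < n \<and> snd q < n \<and>
     ((fst p = fst q \<and> nb (snd p) (snd q)) \<or> (snd p = snd q \<and> {fst p, fst q} \<in> edges G) \<or>
      ({fst p, fst q} \<in> edges G \<and> nb (snd p) (snd q)))"

lemma nb_sym: "nb i j = nb j i" unfolding nb_def by auto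

lemma ins_sym: "{a, b} = {b, a}" by auto

lemma hadj_sym: "hadj G n p q = hadj G n q p"
  unfolding hadj_def using nb_sym[of "snd p" "snd q"] ins_sym[of "fst p" "fst q"] by auto

lemma path_edge_iff: "{i, j} \<in> edges (path_graph n) \<longleftrightarrow> nb i j \<and> i < n \<and> j < n"
proof
  assume "{i, j} \<in> edges (path_graph n)"
  then obtain k where k: "{i, j} = {k, Suc k}" "Suc k < n" unfolding path_graph_def edges_def by auto
  then show "nb i j \<and> i < n \<and> j < n" unfolding nb_def by (auto simp: doubleton_eq_iff)
next
  assume "nb i j \<and> i < n \<and> j < n"
  then show "{i, j} \<in> edges (path_graph n)" unfolding nb_def path_graph_def edges_def
    by (auto simp: doubleton_eq_iff)
qed

lemma sp_verts: "verts (strong_product G (path_graph n)) = verts G \<times> {0..<n}"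
  unfolding strong_product_def verts_def path_graph_def by simp

lemma sp_edges: "edges (strong_product G (path_graph n)) = {{p, q} | p q. hadj G n p q}"
proof -
  have "edges (strong_product G (path_graph n)) =
     {{(x1, y1), (x2, y2)} | x1 y1 x2 y2.
        x1 \<in> verts G \<and> x2 \<in> verts G \<and> y1 \<in> verts (path_graph n) \<and> y2 \<in> verts (path_graph n) \<and>
        ((x1 = x2 \<and> {y1, y2} \<in> edges (path_graph n)) \<or> (y1 = y2 \<and> {x1, x2} \<in> edges G) \<or>
         ({x1, x2} \<in> edges G \<and> {y1, y2} \<in> edges (path_graph n)))}"
    unfolding strong_product_def edges_def by simp
  also have "\<dots> = {{p, q} | p q. hadj G n p q}"
    unfolding hadj_def path_edge_iff
    by (auto simp: path_graph_def verts_def)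
  finally show ?thesis .
qed

locale sp =
  fixes G :: "'a graph" and n :: nat
  assumes sg: "simple_graph G" and n2: "n \<ge> 2"
begin

abbreviation "V \<equiv> verts G"
abbreviation "E \<equiv> edges G"
abbreviation "H \<equiv> strong_product G (path_graph n)"
abbreviation "VH \<equiv> verts H"
abbreviation "EH \<equiv> edges H"
abbreviation "ha \<equiv> hadj G n"

lemma finV: "finite V" using sg unfolding simple_graph_def by auto
lemma Esub: "e \<in> E \<Longrightarrow> card e = 2 \<and> e \<subseteq> V" using sg unfolding simple_graph_def by auto
lemma finE: "finite E"
proof -
  have "E \<subseteq> Pow V" using Esub by auto
  then show ?thesis using finV finite_subset by blast
qed
lemma E_form: "e \<in> E \<Longrightarrow> \<exists>a b. a \<noteq> b \<and> e = {a, b}"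
  using Esub by (metis card_2_iff)
lemma E_ab: "{a, b} \<in> E \<Longrightarrow> a \<noteq> b \<and> a \<in> V \<and> b \<in> V"
  using Esub[of "{a,b}"] by (cases "a = b") auto

lemma VH_eq: "VH = V \<times> {0..<n}" by (rule sp_verts)
lemma EH_eq: "EH = {{p, q} | p q. ha p q}" by (rule sp_edges)

lemma ha_props: "ha p q \<Longrightarrow> p \<noteq> q \<and> p \<in> VH \<and> q \<in> VH"
  unfolding hadj_def VH_eq nb_def using E_ab by (cases p, cases q) auto

lemma EH_iff: "{p, q} \<in> EH \<longleftrightarrow> ha p q"
proof
  assume "{p, q} \<in> EH"
  then obtain a b where "{p, q} = {a, b}" "ha a b" unfolding EH_eq by auto
  then show "ha p q" by (metis doubleton_eq_iff hadj_sym)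
next
  assume "ha p q" then show "{p, q} \<in> EH" unfolding EH_eq by blast
qed

lemma EH_form: "f \<in> EH \<Longrightarrow> \<exists>p q. f = {p, q} \<and> ha p q"
  unfolding EH_eq by auto

lemma finVH: "finite VH" unfolding VH_eq using finV by simp
lemma finEH: "finite EH"
proof -
  have "EH \<subseteq> Pow VH" using EH_form ha_props by blast
  then show ?thesis using finVH finite_subset by blast
qed

lemma card_EH: "f \<in> EH \<Longrightarrow> card f = 2"
  using EH_form ha_props by fastforce

definition cutH :: "('a \<times> nat) set \<Rightarrow> ('a \<times> nat) set set" where
  "cutH X = {f \<in> EH. f \<inter> X \<noteq> {} \<and> \<not> f \<subseteq> X}"
definition cutG :: "'a set \<Rightarrow> 'a set set" where
  "cutG X = {e \<in> E. e \<inter> X \<noteq> {} \<and> \<not> e \<subseteq> X}"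

lemma cutH_mem: "ha p q \<Longrightarrow> (p \<in> X) \<noteq> (q \<in> X) \<Longrightarrow> {p, q} \<in> cutH X"
  unfolding cutH_def using EH_iff by auto

lemma fin_cutH: "finite (cutH X)" unfolding cutH_def using finEH by simp

lemma ha_same: "x \<in> V \<Longrightarrow> Suc j < n \<Longrightarrow> ha (x, j) (x, Suc j)"
  unfolding hadj_def nb_def by auto
lemma ha_lay: "{x, y} \<in> E \<Longrightarrow> j < n \<Longrightarrow> ha (x, j) (y, j)"
  unfolding hadj_def using E_ab by auto
lemma ha_diag: "{x, y} \<in> E \<Longrightarrow> Suc j < n \<Longrightarrow> ha (x, j) (y, Suc j)"
  unfolding hadj_def nb_def using E_ab by auto

lemma lam_le:
  assumes "X \<subseteq> V" "x \<in> X" "y \<in> V" "y \<notin> X"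
  shows "edge_connectivity G \<le> card (cutG X)"
proof -
  let ?G' = "edge_delete G (cutG X)"
  have "\<not> (adj ?G')\<^sup>*\<^sup>* x y"
  proof
    assume "(adj ?G')\<^sup>*\<^sup>* x y"
    then have "y \<in> X"
    proof (induction rule: rtranclp_induct)
      case base then show ?case using assms by simp
    next
      case (step b c)
      then have "{b, c} \<in> E" "{b, c} \<notin> cutG X"
        unfolding adj_def edge_delete_def edges_def by auto
      then show ?case using step unfolding cutG_def by auto
    qed
    then show False using assms by simp
  qed
  then have "\<not> connected ?G'"
    unfolding connected_def reachable_def using assms
    by (auto simp: edge_delete_def verts_def)
  then have "edge_cut G (cutG X)" unfolding edge_cut_def cutG_def by auto
  then have "card (cutG X) \<in> {card S | S. edge_cut G S}" by auto
  then show ?thesis unfolding edge_connectivity_def Inf_nat_def by (rule Least_le)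
qed

end

context sp begin

lemma ha_diag': "{x, y} \<in> E \<Longrightarrow> Suc j < n \<Longrightarrow> ha (x, Suc j) (y, j)"
  using ha_diag[of y x j] hadj_sym[of G n] by (simp add: insert_commute)

definition emp :: "('a \<times> nat) set \<Rightarrow> 'a \<Rightarrow> bool" where
  "emp X y \<longleftrightarrow> (\<forall>j<n. (y, j) \<notin> X)"
definition full :: "('a \<times> nat) set \<Rightarrow> 'a \<Rightarrow> bool" where
  "full X y \<longleftrightarrow> (\<forall>j<n. (y, j) \<in> X)"
definition MM :: "('a \<times> nat) set \<Rightarrow> 'a set" where
  "MM X = {y \<in> V. \<not> emp X y \<and> \<not> full X y}"
definition VC :: "('a \<times> nat) set \<Rightarrow> ('a \<times> nat) set set" where
  "VC X = {f \<in> cutH X. \<exists>x j. f = {(x, j), (x, Suc j)}}"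
definition T :: "('a \<times> nat) set \<Rightarrow> 'a set \<Rightarrow> ('a \<times> nat) set set" where
  "T X e = {f \<in> cutH X. fst ` f = e}"

lemma trans_exists:
  assumes "y \<in> MM X"
  shows "\<exists>j. Suc j < n \<and> ((y, j) \<in> X) \<noteq> ((y, Suc j) \<in> X)"
proof (rule ccontr)
  assume "\<not> ?thesis"
  then have h: "\<And>j. Suc j < n \<Longrightarrow> ((y, j) \<in> X) = ((y, Suc j) \<in> X)" by blast
  have "\<forall>j<n. ((y, j) \<in> X) = ((y, 0) \<in> X)"
  proof (intro allI impI)
    fix j assume "j < n"
    then show "((y, j) \<in> X) = ((y, 0) \<in> X)"
      by (induction j) (auto simp: h)
  qed
  then have "emp X y \<or> full X y" unfolding emp_def full_def by blast
  then show False using assms unfolding MM_def by blast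
qed

lemma card_M_VC: "card (MM X) \<le> card (VC X)"
proof -
  have "(\<lambda>y. {y}) ` MM X \<subseteq> (\<lambda>f. fst ` f) ` VC X"
  proof
    fix s assume "s \<in> (\<lambda>y. {y}) ` MM X"
    then obtain y where y: "y \<in> MM X" "s = {y}" by auto
    obtain j where j: "Suc j < n" "((y, j) \<in> X) \<noteq> ((y, Suc j) \<in> X)"
      using trans_exists[OF y(1)] by blast
    have "y \<in> V" using y unfolding MM_def by auto
    then have "{(y, j), (y, Suc j)} \<in> VC X"
      unfolding VC_def using cutH_mem[OF ha_same[OF _ j(1)] j(2)] by blast
    moreover have "fst ` {(y, j), (y, Suc j)} = s" using y by simp
    ultimately show "s \<in> (\<lambda>f. fst ` f) ` VC X" by (metis image_eqI)
  qed
  moreover have "finite (VC X)" using fin_cutH unfolding VC_def by simp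
  ultimately have "card ((\<lambda>y. {y}) ` MM X) \<le> card (VC X)"
    by (meson card_image_le card_mono finite_imageI le_trans)
  moreover have "card ((\<lambda>y. {y}) ` MM X) = card (MM X)"
    by (rule card_image) (auto simp: inj_on_def)
  ultimately show ?thesis by simp
qed

lemma fin_T: "finite (T X e)" using fin_cutH unfolding T_def by simp

lemma T_ge2:
  assumes e: "{y, z} \<in> E" and y: "y \<in> MM X"
  shows "2 \<le> card (T X {y, z})"
proof -
  obtain j where j: "Suc j < n" "((y, j) \<in> X) \<noteq> ((y, Suc j) \<in> X)"
    using trans_exists[OF y] by blast
  have yz: "y \<noteq> z" using E_ab[OF e] by simp
  define f1 where "f1 = (if ((y, j) \<in> X) = ((z, j) \<in> X) then {(y, Suc j), (z, j)} else {(y, j), (z, j)})"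
  define f2 where "f2 = (if ((y, j) \<in> X) = ((z, Suc j) \<in> X) then {(y, Suc j), (z, Suc j)} else {(y, j), (z, Suc j)})"
  have a1: "ha (y, Suc j) (z, j)" using ha_diag'[OF e j(1)] .
  have a2: "ha (y, j) (z, j)" using ha_lay[OF e] j(1) by simp
  have a3: "ha (y, Suc j) (z, Suc j)" using ha_lay[OF e] j(1) by simp
  have a4: "ha (y, j) (z, Suc j)" using ha_diag[OF e j(1)] .
  have c1: "f1 \<in> cutH X"
  proof (cases "((y, j) \<in> X) = ((z, j) \<in> X)")
    case True then show ?thesis unfolding f1_def using cutH_mem[OF a1] j(2) by simp
  next
    case False then show ?thesis unfolding f1_def using cutH_mem[OF a2] by simp
  qed
  have c2: "f2 \<in> cutH X"
  proof (cases "((y, j) \<in> X) = ((z, Suc j) \<in> X)")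
    case True then show ?thesis unfolding f2_def using cutH_mem[OF a3] j(2) by simp
  next
    case False then show ?thesis unfolding f2_def using cutH_mem[OF a4] by simp
  qed
  have p1: "fst ` f1 = {y, z}" unfolding f1_def by simp
  have p2: "fst ` f2 = {y, z}" unfolding f2_def by simp
  have "{f1, f2} \<subseteq> T X {y, z}" unfolding T_def using c1 c2 p1 p2 by simp
  moreover have "(z, j) \<in> f1" unfolding f1_def by simp
  moreover have "(z, j) \<notin> f2" unfolding f2_def using yz by simp
  ultimately show ?thesis using fin_T
    by (metis card_2_iff card_mono)
qed

lemma T_ge5:
  assumes e: "{y, z} \<in> E" and j: "Suc j < n" "(y, j) \<in> X" "(y, Suc j) \<in> X"
    and z: "emp X z" and n3: "n \<ge> 3"
  shows "5 \<le> card (T X {y, z})"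
proof -
  have yz: "y \<noteq> z" using E_ab[OF e] by simp
  have zn: "\<And>k. k < n \<Longrightarrow> (z, k) \<notin> X" using z unfolding emp_def by blast
  define g5 where "g5 = (if Suc (Suc j) < n then {(y, Suc j), (z, Suc (Suc j))} else {(y, j), (z, j - 1)})"
  have j1: "\<not> Suc (Suc j) < n \<Longrightarrow> j \<ge> 1" using n3 j(1) by linarith
  have c1: "{(y, j), (z, j)} \<in> T X {y, z}" unfolding T_def
    using cutH_mem[OF ha_lay[OF e, of j]] j zn[of j] by simp
  have c2: "{(y, j), (z, Suc j)} \<in> T X {y, z}" unfolding T_def
    using cutH_mem[OF ha_diag[OF e j(1)]] j zn[of "Suc j"] by simp
  have c3: "{(y, Suc j), (z, j)} \<in> T X {y, z}" unfolding T_def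
    using cutH_mem[OF ha_diag'[OF e j(1)]] j zn[of j] by simp
  have c4: "{(y, Suc j), (z, Suc j)} \<in> T X {y, z}" unfolding T_def
    using cutH_mem[OF ha_lay[OF e, of "Suc j"]] j zn[of "Suc j"] by simp
  have c5: "g5 \<in> T X {y, z}"
  proof (cases "Suc (Suc j) < n")
    case True then show ?thesis unfolding T_def g5_def
      using cutH_mem[OF ha_diag[OF e True]] j zn[of "Suc (Suc j)"] by simp
  next
    case False
    then have jj: "Suc (j - 1) = j" using j1 by simp
    have "ha (y, j) (z, j - 1)" using ha_diag'[OF e, of "j - 1"] jj j(1) by simp
    then show ?thesis unfolding T_def g5_def using False cutH_mem j zn[of "j - 1"] by simp
  qed
  have "card {{(y, j), (z, j)}, {(y, j), (z, Suc j)}, {(y, Suc j), (z, j)}, {(y, Suc j), (z, Suc j)}, g5} = 5"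
    unfolding g5_def using yz j1 by (auto simp: doubleton_eq_iff)
  moreover have "{{(y, j), (z, j)}, {(y, j), (z, Suc j)}, {(y, Suc j), (z, j)}, {(y, Suc j), (z, Suc j)}, g5} \<subseteq> T X {y, z}"
    using c1 c2 c3 c4 c5 by simp
  ultimately show ?thesis using fin_T by (metis card_mono)
qed

end

context sp begin

lemma main_sum:
  assumes F: "F \<subseteq> E"
  shows "card (VC X) + (\<Sum>e\<in>F. card (T X e)) \<le> card (cutH X)"
proof -
  have finF: "finite F" using F finE finite_subset by blast
  have "card (\<Union>(T X ` F)) = (\<Sum>e\<in>F. card (T X e))"
    by (rule card_UN_disjoint[OF finF]) (auto simp: fin_T, auto simp: T_def)
  moreover have "VC X \<inter> \<Union>(T X ` F) = {}"
  proof (rule ccontr)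
    assume "VC X \<inter> \<Union>(T X ` F) \<noteq> {}"
    then obtain f e where f: "f \<in> VC X" "e \<in> F" "f \<in> T X e" by blast
    then obtain x j where "f = {(x, j), (x, Suc j)}" unfolding VC_def by blast
    then have "fst ` f = {x}" by simp
    moreover have "fst ` f = e" using f unfolding T_def by simp
    moreover have "card e = 2" using f F Esub by blast
    ultimately show False by simp
  qed
  moreover have "finite (VC X)" using fin_cutH unfolding VC_def by simp
  moreover have "finite (\<Union>(T X ` F))" using finF fin_T by simp
  ultimately have "card (VC X \<union> \<Union>(T X ` F)) = card (VC X) + (\<Sum>e\<in>F. card (T X e))"
    by (simp add: card_Un_disjoint)
  moreover have "VC X \<union> \<Union>(T X ` F) \<subseteq> cutH X" unfolding VC_def T_def by blast
  ultimately show ?thesis using fin_cutH by (metis card_mono)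
qed

lemma inc_form: "e \<in> E \<Longrightarrow> y \<in> e \<Longrightarrow> \<exists>w. e = {y, w}"
  using E_form by blast

lemma beta:
  assumes "MM X = V"
  shows "card V + 2 * card E \<le> card (cutH X)"
proof -
  have "(\<Sum>e\<in>E. 2) \<le> (\<Sum>e\<in>E. card (T X e))"
  proof (rule sum_mono)
    fix e assume e: "e \<in> E"
    then obtain a b where ab: "a \<noteq> b" "e = {a, b}" using E_form by blast
    then have "a \<in> MM X" using assms e E_ab by auto
    then show "2 \<le> card (T X e)" using T_ge2 e ab by simp
  qed
  then show ?thesis using main_sum[of E X] card_M_VC[of X] assms by simp
qed

lemma inc_T2:
  assumes "e \<in> E" "y \<in> e" "y \<in> MM X"
  shows "2 \<le> card (T X e)"
  using inc_form[OF assms(1,2)] T_ge2 assms by auto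

lemma sub2:
  assumes y: "y \<in> MM X" and z: "z \<in> MM X" and e: "{y, z} \<in> E"
  shows "2 + 2 * (degree G y + degree G z - 1) \<le> card (cutH X)"
proof -
  let ?A = "{e \<in> E. y \<in> e}" and ?B = "{e \<in> E. z \<in> e}"
  have yz: "y \<noteq> z" using E_ab[OF e] by simp
  have finA: "finite ?A" "finite ?B" using finE by auto
  have AB: "?A \<inter> ?B = {{y, z}}"
  proof
    show "?A \<inter> ?B \<subseteq> {{y, z}}"
    proof
      fix f assume f: "f \<in> ?A \<inter> ?B"
      then obtain a b where "a \<noteq> b" "f = {a, b}" using E_form by blast
      then show "f \<in> {{y, z}}" using f yz by auto
    qed
  qed (use e in auto)
  have cardF: "card (?A \<union> ?B) = degree G y + degree G z - 1"
    using card_Un_Int[OF finA] AB unfolding degree_def by simp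
  have "(\<Sum>e\<in>?A \<union> ?B. 2) \<le> (\<Sum>e\<in>?A \<union> ?B. card (T X e))"
    by (rule sum_mono) (use inc_T2 y z in auto)
  moreover have "?A \<union> ?B \<subseteq> E" by auto
  ultimately have s: "2 * (degree G y + degree G z - 1) \<le> (\<Sum>e\<in>?A \<union> ?B. card (T X e))"
    using cardF by simp
  have m: "card (VC X) + (\<Sum>e\<in>?A \<union> ?B. card (T X e)) \<le> card (cutH X)"
    by (rule main_sum) auto
  have "2 \<le> card (MM X)"
  proof -
    have "{y, z} \<subseteq> MM X" using y z by simp
    moreover have "finite (MM X)" using finV unfolding MM_def by simp
    ultimately show ?thesis using yz by (metis card_2_iff card_mono)
  qed
  then show ?thesis using s m card_M_VC[of X] by linarith
qed

lemma sub1: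
  assumes y: "y \<in> MM X" and j: "Suc j < n" "(y, j) \<in> X" "(y, Suc j) \<in> X"
    and nbr: "\<And>z. {y, z} \<in> E \<Longrightarrow> emp X z" and n3: "n \<ge> 3"
  shows "1 + 5 * degree G y \<le> card (cutH X)"
proof -
  let ?A = "{e \<in> E. y \<in> e}"
  have "(\<Sum>e\<in>?A. 5) \<le> (\<Sum>e\<in>?A. card (T X e))"
  proof (rule sum_mono)
    fix e assume "e \<in> ?A"
    then obtain w where w: "e = {y, w}" "e \<in> E" using inc_form by blast
    then show "5 \<le> card (T X e)" using T_ge5[OF _ j _ n3] nbr by simp
  qed
  moreover have "1 \<le> card (MM X)"
  proof -
    have "finite (MM X)" using finV unfolding MM_def by simp
    then show ?thesis using y by (metis One_nat_def Suc_leI card_gt_0_iff empty_iff)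
  qed
  ultimately show ?thesis using main_sum[of ?A X] card_M_VC[of X] unfolding degree_def by simp
qed

end

context sp begin

lemma cut_orient: "e \<in> cutG Y \<Longrightarrow> \<exists>a b. e = {a, b} \<and> {a, b} \<in> E \<and> a \<in> Y \<and> b \<notin> Y"
proof -
  assume e: "e \<in> cutG Y"
  then have eE: "e \<in> E" and i: "e \<inter> Y \<noteq> {}" and ns: "\<not> e \<subseteq> Y" unfolding cutG_def by auto
  obtain a b where ab: "e = {a, b}" using E_form[OF eE] by blast
  show ?thesis
  proof (cases "a \<in> Y")
    case True
    then have "b \<notin> Y" using ns ab by simp
    then show ?thesis using True ab eE by blast
  next
    case False
    then have "b \<in> Y" using i ab by auto
    moreover have "{b, a} \<in> E" using eE ab by (simp add: insert_commute)
    ultimately show ?thesis using False ab by (metis insert_commute)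
  qed
qed

definition Bj :: "('a \<times> nat) set \<Rightarrow> nat \<Rightarrow> 'a set" where
  "Bj X j = {x \<in> V. (x, j) \<in> X}"
definition Lc :: "('a \<times> nat) set \<Rightarrow> nat \<Rightarrow> ('a \<times> nat) set set" where
  "Lc X j = {f \<in> cutH X. snd ` f = {j}}"
definition Dc :: "('a \<times> nat) set \<Rightarrow> nat \<Rightarrow> ('a \<times> nat) set set" where
  "Dc X j = {f \<in> cutH X. snd ` f = {j, Suc j}}"

lemma fin_Lc: "finite (Lc X j)" using fin_cutH unfolding Lc_def by simp
lemma fin_Dc: "finite (Dc X j)" using fin_cutH unfolding Dc_def by simp

lemma card_le_img: "A \<subseteq> g ` B \<Longrightarrow> finite B \<Longrightarrow> card A \<le> card B"
  by (meson card_image_le card_mono finite_imageI le_trans)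

lemma xx: "True" by simp
lemma Lc_ge:
  assumes j: "j < n" and z0: "z0 \<in> V" "full X z0" and y0: "y0 \<in> V" "emp X y0"
  shows "edge_connectivity G \<le> card (Lc X j)"
proof -
  have "edge_connectivity G \<le> card (cutG (Bj X j))"
    by (rule lam_le[of _ z0 y0]) (use z0 y0 j in \<open>auto simp: Bj_def full_def emp_def\<close>)
  moreover have "cutG (Bj X j) \<subseteq> (\<lambda>f. fst ` f) ` Lc X j"
  proof
    fix e assume "e \<in> cutG (Bj X j)"
    then obtain a b where ab: "e = {a, b}" "{a, b} \<in> E" "a \<in> Bj X j" "b \<notin> Bj X j"
      using cut_orient by blast
    have "b \<in> V" using E_ab[OF ab(2)] by simp
    then have "{(a, j), (b, j)} \<in> cutH X"
      using cutH_mem[OF ha_lay[OF ab(2) j]] ab unfolding Bj_def by simp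
    then have "{(a, j), (b, j)} \<in> Lc X j" unfolding Lc_def by simp
    moreover have "fst ` {(a, j), (b, j)} = e" using ab by simp
    ultimately show "e \<in> (\<lambda>f. fst ` f) ` Lc X j" by (metis image_eqI)
  qed
  then have "card (cutG (Bj X j)) \<le> card (Lc X j)" by (rule card_le_img[OF _ fin_Lc])
  ultimately show ?thesis by simp
qed

end

context sp begin
lemma Dc_ge:
  assumes j: "Suc j < n" and z0: "z0 \<in> V" "full X z0" and y0: "y0 \<in> V" "emp X y0"
  shows "2 * edge_connectivity G \<le> card (Dc X j)"
proof -
  define W where "W = Bj X j \<inter> Bj X (Suc j)"
  define U where "U = Bj X j \<union> Bj X (Suc j)"
  define D1 where "D1 = {f \<in> Dc X j. \<exists>a b. {a, b} \<in> E \<and> a \<in> W \<and> b \<notin> W \<and>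
      ((b \<notin> Bj X (Suc j) \<and> f = {(a, j), (b, Suc j)}) \<or> (b \<in> Bj X (Suc j) \<and> f = {(b, j), (a, Suc j)}))}"
  define D2 where "D2 = {f \<in> Dc X j. \<exists>a b. {a, b} \<in> E \<and> a \<in> U \<and> b \<notin> U \<and>
      ((a \<in> Bj X (Suc j) \<and> f = {(b, j), (a, Suc j)}) \<or> (a \<notin> Bj X (Suc j) \<and> f = {(a, j), (b, Suc j)}))}"
  have jj: "j < n" using j by simp
  have l1: "edge_connectivity G \<le> card (cutG W)"
    by (rule lam_le[of _ z0 y0]) (use z0 y0 j in \<open>auto simp: W_def Bj_def full_def emp_def\<close>)
  have l2: "edge_connectivity G \<le> card (cutG U)"
    by (rule lam_le[of _ z0 y0]) (use z0 y0 j in \<open>auto simp: U_def Bj_def full_def emp_def\<close>)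
  have s1: "cutG W \<subseteq> (\<lambda>f. fst ` f) ` D1"
  proof
    fix e assume "e \<in> cutG W"
    then obtain a b where ab: "e = {a, b}" "{a, b} \<in> E" "a \<in> W" "b \<notin> W"
      using cut_orient by blast
    have bV: "b \<in> V" using E_ab[OF ab(2)] by simp
    have ba: "{b, a} \<in> E" using ab(2) by (simp add: insert_commute)
    show "e \<in> (\<lambda>f. fst ` f) ` D1"
    proof (cases "b \<in> Bj X (Suc j)")
      case False
      then have "{(a, j), (b, Suc j)} \<in> cutH X"
        using cutH_mem[OF ha_diag[OF ab(2) j]] ab bV unfolding W_def Bj_def by simp
      then have "{(a, j), (b, Suc j)} \<in> D1" unfolding D1_def Dc_def using ab False by auto
      moreover have "fst ` {(a, j), (b, Suc j)} = e" using ab by simp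
      ultimately show ?thesis by (metis image_eqI)
    next
      case True
      then have "{(b, j), (a, Suc j)} \<in> cutH X"
        using cutH_mem[OF ha_diag[OF ba j]] ab bV unfolding W_def Bj_def by simp
      then have "{(b, j), (a, Suc j)} \<in> D1" unfolding D1_def Dc_def using ab True by auto
      moreover have "fst ` {(b, j), (a, Suc j)} = e" using ab by auto
      ultimately show ?thesis by (metis image_eqI)
    qed
  qed
  have s2: "cutG U \<subseteq> (\<lambda>f. fst ` f) ` D2"
  proof
    fix e assume "e \<in> cutG U"
    then obtain a b where ab: "e = {a, b}" "{a, b} \<in> E" "a \<in> U" "b \<notin> U"
      using cut_orient by blast
    have bV: "b \<in> V" using E_ab[OF ab(2)] by simp
    have ba: "{b, a} \<in> E" using ab(2) by (simp add: insert_commute)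
    show "e \<in> (\<lambda>f. fst ` f) ` D2"
    proof (cases "a \<in> Bj X (Suc j)")
      case True
      then have "{(b, j), (a, Suc j)} \<in> cutH X"
        using cutH_mem[OF ha_diag[OF ba j]] ab bV unfolding U_def Bj_def by simp
      then have "{(b, j), (a, Suc j)} \<in> D2" unfolding D2_def Dc_def using ab True by auto
      moreover have "fst ` {(b, j), (a, Suc j)} = e" using ab by auto
      ultimately show ?thesis by (metis image_eqI)
    next
      case False
      then have "a \<in> Bj X j" using ab(3) unfolding U_def by simp
      then have "{(a, j), (b, Suc j)} \<in> cutH X"
        using cutH_mem[OF ha_diag[OF ab(2) j]] ab bV unfolding U_def Bj_def by simp
      then have "{(a, j), (b, Suc j)} \<in> D2" unfolding D2_def Dc_def using ab False by auto
      moreover have "fst ` {(a, j), (b, Suc j)} = e" using ab by simp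
      ultimately show ?thesis by (metis image_eqI)
    qed
  qed
  have disj: "D1 \<inter> D2 = {}"
  proof (rule ccontr)
    assume "D1 \<inter> D2 \<noteq> {}"
    then obtain f where f1: "f \<in> D1" and f2: "f \<in> D2" by blast
    from f1 obtain a b where ab: "{a, b} \<in> E" "a \<in> W" "b \<notin> W"
      "(b \<notin> Bj X (Suc j) \<and> f = {(a, j), (b, Suc j)}) \<or> (b \<in> Bj X (Suc j) \<and> f = {(b, j), (a, Suc j)})"
      unfolding D1_def by blast
    from f2 obtain c d where cd: "{c, d} \<in> E" "c \<in> U" "d \<notin> U"
      "(c \<in> Bj X (Suc j) \<and> f = {(d, j), (c, Suc j)}) \<or> (c \<notin> Bj X (Suc j) \<and> f = {(c, j), (d, Suc j)})"
      unfolding D2_def by blast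
    have key: "\<And>p q p' q'. {(p, j), (q, Suc j)} = {(p', j), (q', Suc j)} \<Longrightarrow> p = p' \<and> q = q'"
      by (auto simp: doubleton_eq_iff)
    have aW: "a \<in> Bj X j" "a \<in> Bj X (Suc j)" using ab(2) unfolding W_def by auto
    from ab(4) show False
    proof
      assume A: "b \<notin> Bj X (Suc j) \<and> f = {(a, j), (b, Suc j)}"
      from cd(4) show False
      proof
        assume C: "c \<in> Bj X (Suc j) \<and> f = {(d, j), (c, Suc j)}"
        then have "{(a, j), (b, Suc j)} = {(d, j), (c, Suc j)}" using A by simp
        from key[OF this] have "a = d" by simp
        then show False using cd(3) aW unfolding U_def by simp
      next
        assume C: "c \<notin> Bj X (Suc j) \<and> f = {(c, j), (d, Suc j)}"
        then have "{(a, j), (b, Suc j)} = {(c, j), (d, Suc j)}" using A by simp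
        from key[OF this] have "a = c" by simp
        then show False using C aW by simp
      qed
    next
      assume A: "b \<in> Bj X (Suc j) \<and> f = {(b, j), (a, Suc j)}"
      from cd(4) show False
      proof
        assume C: "c \<in> Bj X (Suc j) \<and> f = {(d, j), (c, Suc j)}"
        then have "{(b, j), (a, Suc j)} = {(d, j), (c, Suc j)}" using A by simp
        from key[OF this] have "b = d" by simp
        then show False using cd(3) A unfolding U_def by simp
      next
        assume C: "c \<notin> Bj X (Suc j) \<and> f = {(c, j), (d, Suc j)}"
        then have "{(b, j), (a, Suc j)} = {(c, j), (d, Suc j)}" using A by simp
        from key[OF this] have "b = c" by simp
        then show False using C A by simp
      qed
    qed
  qed
  have fD: "finite D1" "finite D2" using fin_Dc unfolding D1_def D2_def by auto
  have "card (cutG W) + card (cutG U) \<le> card D1 + card D2"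
    using card_le_img[OF s1 fD(1)] card_le_img[OF s2 fD(2)] by simp
  also have "\<dots> = card (D1 \<union> D2)"
    using disj fD by (simp add: card_Un_disjoint)
  also have "\<dots> \<le> card (Dc X j)"
    using fin_Dc unfolding D1_def D2_def by (intro card_mono) auto
  finally show ?thesis using l1 l2 by simp
qed

end

context sp begin
lemma alpha:
  assumes z0: "z0 \<in> V" "full X z0" and y0: "y0 \<in> V" "emp X y0"
  shows "(3 * n - 2) * edge_connectivity G \<le> card (cutH X)"
proof -
  let ?l = "edge_connectivity G"
  let ?LL = "\<Union>j\<in>{..<n}. Lc X j" and ?DD = "\<Union>j\<in>{..<n-1}. Dc X j"
  have dL: "\<forall>i\<in>{..<n}. \<forall>j\<in>{..<n}. i \<noteq> j \<longrightarrow> Lc X i \<inter> Lc X j = {}"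
  proof (intro ballI impI)
    fix i k :: nat assume "i \<noteq> k"
    show "Lc X i \<inter> Lc X k = {}"
    proof (rule ccontr)
      assume "Lc X i \<inter> Lc X k \<noteq> {}"
      then obtain f where "f \<in> Lc X i" "f \<in> Lc X k" by blast
      then have "snd ` f = {i}" "snd ` f = {k}" unfolding Lc_def by auto
      then show False using \<open>i \<noteq> k\<close> by auto
    qed
  qed
  have cL: "card ?LL = (\<Sum>j<n. card (Lc X j))"
    by (rule card_UN_disjoint[OF _ _ dL]) (simp_all add: fin_Lc)
  have dD: "\<forall>i\<in>{..<n - 1}. \<forall>j\<in>{..<n - 1}. i \<noteq> j \<longrightarrow> Dc X i \<inter> Dc X j = {}"
  proof (intro ballI impI)
    fix i k :: nat assume "i \<noteq> k"
    show "Dc X i \<inter> Dc X k = {}"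
    proof (rule ccontr)
      assume "Dc X i \<inter> Dc X k \<noteq> {}"
      then obtain f where "f \<in> Dc X i" "f \<in> Dc X k" by blast
      then have "snd ` f = {i, Suc i}" "snd ` f = {k, Suc k}" unfolding Dc_def by auto
      then have "{i, Suc i} = {k, Suc k}" by simp
      then show False using \<open>i \<noteq> k\<close> by (auto simp: doubleton_eq_iff)
    qed
  qed
  have cD: "card ?DD = (\<Sum>j<n-1. card (Dc X j))"
    by (rule card_UN_disjoint[OF _ _ dD]) (simp_all add: fin_Dc)
  have "(\<Sum>j<n. ?l) \<le> (\<Sum>j<n. card (Lc X j))"
  proof (rule sum_mono)
    fix j assume "j \<in> {..<n}"
    then show "?l \<le> card (Lc X j)" using Lc_ge[OF _ z0 y0] by simp
  qed
  then have gL: "n * ?l \<le> card ?LL" using cL by simp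
  have "(\<Sum>j<n-1. 2 * ?l) \<le> (\<Sum>j<n-1. card (Dc X j))"
  proof (rule sum_mono)
    fix j assume "j \<in> {..<n-1}"
    then have "Suc j < n" by simp
    then show "2 * ?l \<le> card (Dc X j)" using Dc_ge[OF _ z0 y0] by simp
  qed
  then have gD: "(n - 1) * (2 * ?l) \<le> card ?DD" using cD by simp
  have disj: "?LL \<inter> ?DD = {}"
  proof (rule ccontr)
    assume "?LL \<inter> ?DD \<noteq> {}"
    then obtain f j k where f: "f \<in> Lc X j" "f \<in> Dc X k" by blast
    have e1: "snd ` f = {j}" using f(1) unfolding Lc_def by blast
    have e2: "snd ` f = {k, Suc k}" using f(2) unfolding Dc_def by blast
    have "k \<in> snd ` f" "Suc k \<in> snd ` f" using e2 by blast+
    then have "k = j" "Suc k = j" using e1 by blast+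
    then show False by simp
  qed
  have fin: "finite ?LL" "finite ?DD" using fin_Lc fin_Dc by auto
  have sub: "?LL \<union> ?DD \<subseteq> cutH X" unfolding Lc_def Dc_def by blast
  have "card (?LL \<union> ?DD) \<le> card (cutH X)"
    using fin_cutH sub by (rule card_mono)
  moreover have "card (?LL \<union> ?DD) = card ?LL + card ?DD" using card_Un_disjoint[OF fin disj] .
  ultimately have "n * ?l + (n - 1) * (2 * ?l) \<le> card (cutH X)"
    using gL gD by linarith
  moreover have "(3 * n - 2) * ?l = n * ?l + (n - 1) * (2 * ?l)"
  proof -
    have "3 * n - 2 = n + (n - 1) * 2" using n2 by simp
    then show ?thesis by (simp add: algebra_simps)
  qed
  ultimately show ?thesis by simp
qed

end

context sp begin

lemma mindeg_le: "y \<in> V \<Longrightarrow> min_degree G \<le> degree G y"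
  unfolding min_degree_def by (rule Min_le) (simp_all add: finV)

lemma minedeg_le:
  assumes e: "{y, z} \<in> E"
  shows "min_edge_degree G \<le> degree G y + degree G z - 2"
proof -
  let ?Q = "{degree G u + degree G v - 2 | u v. {u, v} \<in> edges G \<and> u \<noteq> v}"
  have "?Q \<subseteq> (\<lambda>(u, v). degree G u + degree G v - 2) ` (V \<times> V)"
    using E_ab by fastforce
  then have "finite ?Q" using finV finite_subset by blast
  moreover have "degree G y + degree G z - 2 \<in> ?Q" using e E_ab[OF e] by blast
  ultimately show ?thesis unfolding min_edge_degree_def by (rule Min_le)
qed

lemma deg_pos: "{y, z} \<in> E \<Longrightarrow> 1 \<le> degree G y"
proof -
  assume e: "{y, z} \<in> E"
  have "finite {e \<in> E. y \<in> e}" using finE by simp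
  moreover have "{y, z} \<in> {e \<in> E. y \<in> e}" using e by simp
  ultimately show ?thesis unfolding degree_def
    by (metis One_nat_def Suc_leI card_gt_0_iff empty_iff)
qed

lemma gamma:
  assumes X: "X \<subseteq> VH" "(y0, j0) \<in> X" and nbrX: "\<forall>p\<in>X. \<exists>q\<in>X. ha p q"
    and nf: "\<forall>y\<in>V. \<not> full X y"
  shows "min (2 * min_edge_degree G + 4) (5 * min_degree G + 1) \<le> card (cutH X)"
proof -
  have y0: "y0 \<in> V" "j0 < n" using X VH_eq by auto
  have y0M: "y0 \<in> MM X" unfolding MM_def emp_def using y0 X nf by auto
  show ?thesis
  proof (cases "\<exists>z. z \<in> MM X \<and> {y0, z} \<in> E")
    case True
    then obtain z where z: "z \<in> MM X" "{y0, z} \<in> E" by blast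
    have s: "2 + 2 * (degree G y0 + degree G z - 1) \<le> card (cutH X)" using sub2[OF y0M z(1) z(2)] .
    have d1: "1 \<le> degree G y0" using deg_pos[OF z(2)] .
    have d2: "1 \<le> degree G z" using deg_pos[of z y0] z(2) by (simp add: insert_commute)
    have "min_edge_degree G \<le> degree G y0 + degree G z - 2" using minedeg_le[OF z(2)] .
    then have "2 * min_edge_degree G + 4 \<le> card (cutH X)" using s d1 d2 by linarith
    then show ?thesis by simp
  next
    case False
    obtain q where q: "q \<in> X" "ha (y0, j0) q" using nbrX X by blast
    obtain z k where zk: "q = (z, k)" by (cases q)
    have zV: "z \<in> V" "k < n" using ha_props[OF q(2)] zk VH_eq by auto
    have zy: "z = y0"
    proof (rule ccontr)
      assume "z \<noteq> y0"
      then have "{y0, z} \<in> E" using q(2) zk unfolding hadj_def by auto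
      moreover have "z \<in> MM X" unfolding MM_def emp_def using zV nf q zk by auto
      ultimately show False using False by blast
    qed
    have "\<not> {y0, y0} \<in> E" using E_ab by blast
    then have nbk: "nb j0 k" using q(2) zk zy unfolding hadj_def by auto
    obtain j where j: "Suc j < n" "(y0, j) \<in> X" "(y0, Suc j) \<in> X"
    proof (cases "k = Suc j0")
      case True then show ?thesis using that[of j0] zV q zk zy X by auto
    next
      case False then have "j0 = Suc k" using nbk unfolding nb_def by simp
      then show ?thesis using that[of k] y0 q zk zy X by auto
    qed
    obtain i where i: "i < n" "(y0, i) \<notin> X" using nf y0 unfolding full_def by blast
    have n3: "n \<ge> 3"
    proof -
      have "i \<noteq> j" "i \<noteq> Suc j" using i j by auto
      then show ?thesis using i(1) j(1) by linarith
    qed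
    have nbr: "\<And>z. {y0, z} \<in> E \<Longrightarrow> emp X z"
    proof -
      fix z assume e: "{y0, z} \<in> E"
      then have "z \<notin> MM X" using False by blast
      moreover have "z \<in> V" "\<not> full X z" using E_ab[OF e] nf by auto
      ultimately show "emp X z" unfolding MM_def by blast
    qed
    have "1 + 5 * degree G y0 \<le> card (cutH X)" using sub1[OF y0M j nbr n3] .
    moreover have "min_degree G \<le> degree G y0" using mindeg_le y0 by simp
    ultimately have "5 * min_degree G + 1 \<le> card (cutH X)" by linarith
    then show ?thesis by simp
  qed
qed

lemma cutH_compl:
  assumes "X \<subseteq> VH" shows "cutH (VH - X) = cutH X"
proof -
  have "\<And>f. f \<in> EH \<Longrightarrow> f \<subseteq> VH" using EH_form ha_props by blast
  then show ?thesis unfolding cutH_def using assms by blast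
qed

lemma core:
  assumes X: "X \<subseteq> VH" "a \<in> X" "b \<in> VH" "b \<notin> X"
    and nbrX: "\<forall>p\<in>X. \<exists>q\<in>X. ha p q" and nbrY: "\<forall>p\<in>VH - X. \<exists>q\<in>VH - X. ha p q"
    and hyp: "min (2 * min_edge_degree G + 4) (5 * min_degree G + 1) \<le> (3 * n - 2) * edge_connectivity G"
  shows "min (2 * min_edge_degree G + 4) (5 * min_degree G + 1) \<le> card (cutH X)"
proof (cases "\<forall>y\<in>V. \<not> full X y")
  case True
  obtain y0 j0 where "a = (y0, j0)" by (cases a)
  then show ?thesis using gamma[OF X(1) _ nbrX True] X by simp
next
  case nf: False
  show ?thesis
  proof (cases "\<forall>y\<in>V. \<not> emp X y")
    case True
    obtain y0 j0 where ab: "b = (y0, j0)" by (cases b)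
    have "\<forall>y\<in>V. \<not> full (VH - X) y"
      using True unfolding full_def emp_def VH_eq by auto
    then have "min (2 * min_edge_degree G + 4) (5 * min_degree G + 1) \<le> card (cutH (VH - X))"
      using gamma[of "VH - X" y0 j0] nbrY X ab by auto
    then show ?thesis using cutH_compl[OF X(1)] by simp
  next
    case False
    then obtain y0 where "y0 \<in> V" "emp X y0" by blast
    moreover obtain z0 where "z0 \<in> V" "full X z0" using nf by blast
    ultimately show ?thesis using alpha[of z0 X y0] hyp by simp
  qed
qed

end

context sp begin

definition NG :: "'a \<Rightarrow> 'a set" where "NG x = {y. {x, y} \<in> E}"

lemma NG_card: "card (NG x) \<le> degree G x"
proof -
  have fin: "finite (NG x)"
  proof -
    have "NG x \<subseteq> V" unfolding NG_def using E_ab by blast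
    then show ?thesis using finV finite_subset by blast
  qed
  have inj: "inj_on (\<lambda>y. {x, y}) (NG x)"
    unfolding inj_on_def NG_def using E_ab by (auto simp: doubleton_eq_iff)
  have "(\<lambda>y. {x, y}) ` NG x \<subseteq> {e \<in> E. x \<in> e}" unfolding NG_def by auto
  then have "card ((\<lambda>y. {x, y}) ` NG x) \<le> degree G x"
    unfolding degree_def using finE by (intro card_mono) auto
  then show ?thesis using card_image[OF inj] by simp
qed

lemma fin_NG: "finite (NG x)"
proof -
  have "NG x \<subseteq> V" unfolding NG_def using E_ab by blast
  then show ?thesis using finV finite_subset by blast
qed

lemma degH_le:
  assumes x: "x \<in> V" "j < n" and K: "finite K" "j \<in> K" "\<And>k. k < n \<Longrightarrow> nb j k \<Longrightarrow> k \<in> K"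
  shows "degree H (x, j) \<le> (degree G x + 1) * card K - 1"
proof -
  let ?p = "(x, j)"
  let ?A = "(insert x (NG x) \<times> K) - {?p}"
  have sub: "{f \<in> EH. ?p \<in> f} \<subseteq> (\<lambda>q. {?p, q}) ` ?A"
  proof
    fix f assume f: "f \<in> {f \<in> EH. ?p \<in> f}"
    then obtain p' q' where pq: "f = {p', q'}" "ha p' q'" using EH_form by blast
    obtain q where q: "f = {?p, q}" "ha ?p q"
    proof (cases "p' = ?p")
      case True then show ?thesis using that pq by simp
    next
      case False
      then have "q' = ?p" using f pq by auto
      then show ?thesis using that[of p'] pq hadj_sym[of G n] by (simp add: insert_commute)
    qed
    obtain z k where zk: "q = (z, k)" by (cases q)
    have "q \<noteq> ?p" using ha_props[OF q(2)] by auto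
    moreover have "z = x \<or> z \<in> NG x" using q(2) zk unfolding hadj_def NG_def by auto
    moreover have "k \<in> K" using q(2) zk K unfolding hadj_def by auto
    ultimately have "q \<in> ?A" using zk by auto
    then show "f \<in> (\<lambda>q. {?p, q}) ` ?A" using q by blast
  qed
  have finA: "finite ?A" using fin_NG K by simp
  have "degree H ?p \<le> card ?A"
    unfolding degree_def using sub finA by (meson card_image_le card_mono finite_imageI le_trans)
  also have "card ?A = card (insert x (NG x)) * card K - 1"
    using x K fin_NG by (simp add: card_cartesian_product)
  also have "\<dots> \<le> (degree G x + 1) * card K - 1"
  proof -
    have "card (insert x (NG x)) \<le> degree G x + 1"
    proof -
      have "card (insert x (NG x)) \<le> card (NG x) + 1"
        using fin_NG[of x] by (simp add: card_insert_if)
      then show ?thesis using NG_card[of x] by linarith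
    qed
    then show ?thesis by (intro diff_le_mono mult_le_mono1)
  qed
  finally show ?thesis .
qed

lemma degH0: "x \<in> V \<Longrightarrow> degree H (x, 0) \<le> 2 * degree G x + 1"
proof -
  assume x: "x \<in> V"
  have "degree H (x, 0) \<le> (degree G x + 1) * card {0::nat, 1} - 1"
    by (rule degH_le) (use x n2 in \<open>auto simp: nb_def\<close>)
  then show ?thesis by simp
qed

lemma degH1: "x \<in> V \<Longrightarrow> degree H (x, 1) \<le> 3 * degree G x + 2"
proof -
  assume x: "x \<in> V"
  have "degree H (x, 1) \<le> (degree G x + 1) * card {0::nat, 1, 2} - 1"
    by (rule degH_le) (use x n2 in \<open>auto simp: nb_def\<close>)
  then show ?thesis by simp
qed

lemma minedgeH_le:
  assumes "{u, v} \<in> EH" "u \<noteq> v"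
  shows "min_edge_degree H \<le> degree H u + degree H v - 2"
proof -
  let ?Q = "{degree H u + degree H v - 2 | u v. {u, v} \<in> EH \<and> u \<noteq> v}"
  have "?Q \<subseteq> (\<lambda>(u, v). degree H u + degree H v - 2) ` (VH \<times> VH)"
  proof
    fix t assume "t \<in> ?Q"
    then obtain u' v' where uv: "{u', v'} \<in> EH" "t = degree H u' + degree H v' - 2" by blast
    then have "u' \<in> VH" "v' \<in> VH" using EH_iff ha_props by blast+
    then show "t \<in> (\<lambda>(u, v). degree H u + degree H v - 2) ` (VH \<times> VH)"
      using uv(2) by force
  qed
  then have "finite ?Q" using finVH finite_subset by blast
  moreover have "degree H u + degree H v - 2 \<in> ?Q" using assms by blast
  ultimately show ?thesis unfolding min_edge_degree_def by (rule Min_le)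
qed

lemma xiH_le1:
  assumes e: "{y0, z0} \<in> E"
  shows "min_edge_degree H \<le> 2 * min_edge_degree G + 4"
proof -
  let ?Q = "{degree G u + degree G v - 2 | u v. {u, v} \<in> E \<and> u \<noteq> v}"
  have "?Q \<subseteq> (\<lambda>(u, v). degree G u + degree G v - 2) ` (V \<times> V)"
    using E_ab by fastforce
  then have "finite ?Q" using finV finite_subset by blast
  moreover have "?Q \<noteq> {}" using e E_ab[OF e] by blast
  ultimately have "Min ?Q \<in> ?Q" by (rule Min_in)
  then obtain y z where yz: "{y, z} \<in> E" "y \<noteq> z" "min_edge_degree G = degree G y + degree G z - 2"
    unfolding min_edge_degree_def by blast
  have yzV: "y \<in> V" "z \<in> V" using E_ab[OF yz(1)] by auto
  have h: "ha (y, 0) (z, 0)" using ha_lay[OF yz(1)] n2 by simp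
  have "min_edge_degree H \<le> degree H (y, 0) + degree H (z, 0) - 2"
    using minedgeH_le[of "(y, 0)" "(z, 0)"] EH_iff h ha_props by blast
  moreover have "1 \<le> degree G y" using deg_pos[OF yz(1)] .
  moreover have "1 \<le> degree G z" using deg_pos[of z y] yz(1) by (simp add: insert_commute)
  ultimately show ?thesis using degH0[OF yzV(1)] degH0[OF yzV(2)] yz(3) by linarith
qed

lemma xiH_le2:
  assumes "V \<noteq> {}"
  shows "min_edge_degree H \<le> 5 * min_degree G + 1"
proof -
  have "min_degree G \<in> degree G ` V" unfolding min_degree_def
    using assms finV by (intro Min_in) auto
  then obtain x where x: "x \<in> V" "min_degree G = degree G x" by blast
  have h: "ha (x, 0) (x, 1)" using ha_same[OF x(1), of 0] n2 by simp
  have "min_edge_degree H \<le> degree H (x, 0) + degree H (x, 1) - 2"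
    using minedgeH_le[of "(x, 0)" "(x, 1)"] EH_iff h ha_props by blast
  then show ?thesis using degH0[OF x(1)] degH1[OF x(1)] x(2) by linarith
qed

end

context sp begin

abbreviation "H' S \<equiv> edge_delete H S"

lemma adjH': "adj (H' S) p q \<longleftrightarrow> {p, q} \<in> EH \<and> {p, q} \<notin> S"
  unfolding adj_def edge_delete_def edges_def by simp

lemma vertsH': "verts (H' S) = VH"
  unfolding edge_delete_def verts_def by simp

lemma adjH'_sym: "adj (H' S) p q \<Longrightarrow> adj (H' S) q p"
  unfolding adjH' by (simp add: insert_commute)

lemma rtr_sym: "(adj (H' S))\<^sup>*\<^sup>* p q \<Longrightarrow> (adj (H' S))\<^sup>*\<^sup>* q p"
proof (induction rule: rtranclp_induct)
  case base then show ?case by simp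
next
  case (step b c)
  then show ?case using adjH'_sym by (meson converse_rtranclp_into_rtranclp)
qed

lemma has_nbr:
  assumes con: "connected G" and nt: "nontrivial G" and x: "x \<in> V"
  shows "\<exists>y. {x, y} \<in> E"
proof -
  have "\<exists>x'\<in>V. x' \<noteq> x"
  proof (rule ccontr)
    assume "\<not> ?thesis"
    then have "V \<subseteq> {x}" by blast
    then have "card V \<le> 1" using card_mono[of "{x}" V] by simp
    then show False using nt unfolding nontrivial_def by simp
  qed
  then obtain x' where x': "x' \<in> V" "x' \<noteq> x" by blast
  then have "(adj G)\<^sup>*\<^sup>* x x'" using con x unfolding connected_def reachable_def by blast
  then show ?thesis using x'(2)
    by (metis adj_def converse_rtranclpE)
qed

lemma H_nbr:
  assumes con: "connected G" and nt: "nontrivial G" and w: "w \<in> VH"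
  shows "\<exists>w'. ha w w' \<and> w' \<noteq> u \<and> w' \<noteq> v"
proof -
  obtain x j where xj: "w = (x, j)" by (cases w)
  have xV: "x \<in> V" "j < n" using w xj VH_eq by auto
  obtain y where y: "{x, y} \<in> E" using has_nbr[OF con nt xV(1)] by blast
  have xy: "x \<noteq> y" "y \<in> V" using E_ab[OF y] by auto
  define j' where "j' = (if Suc j < n then Suc j else j - 1)"
  have j': "j' < n" "nb j j'" unfolding j'_def nb_def using xV(2) n2 by auto
  have c1: "ha w (x, j')" unfolding xj hadj_def using xV j' by simp
  have c2: "ha w (y, j)" unfolding xj hadj_def using xV xy y by simp
  have c3: "ha w (y, j')" unfolding xj hadj_def using xV j' xy y by simp
  have "j \<noteq> j'" using j'(2) unfolding nb_def by auto
  then show ?thesis using c1 c2 c3 xy by (metis prod.inject)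
qed

lemma upper:
  assumes con: "connected G" and nt: "nontrivial G"
  shows "\<exists>S. restricted_edge_cut H S \<and> card S = min_edge_degree H"
proof -
  let ?Q = "{degree H u + degree H v - 2 | u v. {u, v} \<in> EH \<and> u \<noteq> v}"
  have "?Q \<subseteq> (\<lambda>(u, v). degree H u + degree H v - 2) ` (VH \<times> VH)"
  proof
    fix t assume "t \<in> ?Q"
    then obtain u' v' where uv: "{u', v'} \<in> EH" "t = degree H u' + degree H v' - 2" by blast
    then have "u' \<in> VH" "v' \<in> VH" using EH_iff ha_props by blast+
    then show "t \<in> (\<lambda>(u, v). degree H u + degree H v - 2) ` (VH \<times> VH)"
      using uv(2) by force
  qed
  then have finQ: "finite ?Q" using finVH finite_subset by blast
  have "V \<noteq> {}" using con unfolding connected_def by simp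
  then obtain x where x: "x \<in> V" by blast
  obtain y where y: "{x, y} \<in> E" using has_nbr[OF con nt x] by blast
  have "ha (x, 0) (y, 0)" using ha_lay[OF y] n2 by simp
  then have "{(x, 0), (y, 0)} \<in> EH" "(x, 0) \<noteq> (y, 0)" using EH_iff ha_props by blast+
  then have "?Q \<noteq> {}" by blast
  then have "Min ?Q \<in> ?Q" using finQ by (intro Min_in) auto
  then obtain u v where uv: "{u, v} \<in> EH" "u \<noteq> v" "min_edge_degree H = degree H u + degree H v - 2"
    unfolding min_edge_degree_def by blast
  have uvV: "u \<in> VH" "v \<in> VH" using uv(1) EH_iff ha_props by blast+
  let ?Au = "{f \<in> EH. u \<in> f}" and ?Av = "{f \<in> EH. v \<in> f}"
  define S where "S = (?Au \<union> ?Av) - {{u, v}}"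
  have finA: "finite ?Au" "finite ?Av" using finEH by auto
  have AI: "?Au \<inter> ?Av = {{u, v}}"
  proof
    show "?Au \<inter> ?Av \<subseteq> {{u, v}}"
    proof
      fix f assume f: "f \<in> ?Au \<inter> ?Av"
      then obtain p q where "f = {p, q}" using EH_form by blast
      then show "f \<in> {{u, v}}" using f uv(2) by auto
    qed
  qed (use uv in auto)
  have cU: "card (?Au \<union> ?Av) = degree H u + degree H v - 1"
    using card_Un_Int[OF finA] AI unfolding degree_def by simp
  have cS: "card S = min_edge_degree H"
    unfolding S_def using cU uv(1,3) finA by (simp add: card_Diff_singleton)
  have SE: "S \<subseteq> EH" unfolding S_def by auto
  have "card VH \<ge> 4"
  proof -
    have "card V \<ge> 2" using nt unfolding nontrivial_def by simp
    then have "card V * n \<ge> 2 * 2" using n2 by (intro mult_le_mono) auto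
    then show ?thesis unfolding VH_eq by (simp add: card_cartesian_product)
  qed
  then obtain w where w: "w \<in> VH" "w \<noteq> u" "w \<noteq> v"
  proof -
    have "\<not> VH \<subseteq> {u, v}"
    proof
      assume "VH \<subseteq> {u, v}"
      then have "card VH \<le> card {u, v}" by (intro card_mono) auto
      also have "\<dots> \<le> 2" by (simp add: card_insert_if)
      finally show False using \<open>card VH \<ge> 4\<close> by simp
    qed
    then show ?thesis using that by blast
  qed
  have stay: "(adj (H' S))\<^sup>*\<^sup>* u t \<Longrightarrow> t \<in> {u, v}" for t
  proof (induction rule: rtranclp_induct)
    case base then show ?case by simp
  next
    case (step b c)
    then have "{b, c} \<in> EH" "{b, c} \<notin> S" using adjH' by auto
    then have "{b, c} = {u, v}" using step(3) unfolding S_def by auto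
    then show ?case by auto
  qed
  have nc: "\<not> connected (H' S)"
    unfolding connected_def reachable_def vertsH' using stay w uvV by blast
  have comp: "\<forall>t\<in>verts (H' S). card (component (H' S) t) \<ge> 2"
  proof
    fix t assume t: "t \<in> verts (H' S)"
    then have tV: "t \<in> VH" using vertsH' by simp
    obtain t' where t': "adj (H' S) t t'" "t' \<noteq> t"
    proof (cases "t = u \<or> t = v")
      case True
      have "adj (H' S) u v" using uv unfolding adjH' S_def by simp
      moreover have "adj (H' S) v u" using uv unfolding adjH' S_def by (simp add: insert_commute)
      ultimately show ?thesis using that True uv(2) by blast
    next
      case False
      obtain t' where "ha t t'" "t' \<noteq> u" "t' \<noteq> v" using H_nbr[OF con nt tV] by blast
      moreover have "t' \<noteq> t" using ha_props[OF calculation(1)] by metis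
      moreover have "{t, t'} \<notin> S" unfolding S_def using False calculation by auto
      ultimately show ?thesis using that EH_iff adjH' by blast
    qed
    have t'V: "t' \<in> VH" using t'(1) adjH' EH_iff ha_props by blast
    have "{t, t'} \<subseteq> component (H' S) t"
      unfolding component_def reachable_def vertsH' using tV t'V t'(1) by auto
    moreover have "finite (component (H' S) t)"
    proof -
      have "component (H' S) t \<subseteq> VH" unfolding component_def reachable_def vertsH' by auto
      then show ?thesis using finVH finite_subset by blast
    qed
    ultimately have "card {t, t'} \<le> card (component (H' S) t)" by (rule card_mono[rotated])
    then show "card (component (H' S) t) \<ge> 2" using t'(2) by simp
  qed
  have "restricted_edge_cut H S"
    unfolding restricted_edge_cut_def edge_cut_def using SE nc comp by (simp add: vertsH')
  then show ?thesis using cS by blast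
qed

end

context sp begin

lemma lower:
  assumes con: "connected G" and nt: "nontrivial G"
    and hyp: "min (2 * min_edge_degree G + 4) (5 * min_degree G + 1) \<le> (3 * n - 2) * edge_connectivity G"
    and S: "restricted_edge_cut H S"
  shows "min_edge_degree H \<le> card S"
proof -
  have SE: "S \<subseteq> EH" and nc: "\<not> connected (H' S)"
    and comp: "\<forall>t\<in>VH. card (component (H' S) t) \<ge> 2"
    using S unfolding restricted_edge_cut_def edge_cut_def by auto
  have "VH \<noteq> {}"
  proof -
    have "V \<noteq> {}" using con unfolding connected_def by simp
    then show ?thesis unfolding VH_eq using n2 by auto
  qed
  then obtain a b where ab: "a \<in> VH" "b \<in> VH" "\<not> (adj (H' S))\<^sup>*\<^sup>* a b"
    using nc unfolding connected_def reachable_def vertsH' by blast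
  define C where "C = {t. t \<in> VH \<and> (adj (H' S))\<^sup>*\<^sup>* a t}"
  have adjV: "adj (H' S) p q \<Longrightarrow> ha p q \<and> q \<in> VH" for p q
    using adjH' EH_iff ha_props by blast
  have step: "t \<in> VH \<Longrightarrow> \<exists>t1. adj (H' S) t t1" for t
  proof -
    assume tV: "t \<in> VH"
    have "card (component (H' S) t) \<ge> 2" using comp tV by blast
    then obtain t' where t': "t' \<in> component (H' S) t" "t' \<noteq> t"
    proof -
      have "\<not> component (H' S) t \<subseteq> {t}"
      proof
        assume "component (H' S) t \<subseteq> {t}"
        then have "card (component (H' S) t) \<le> 1"
          using card_mono[of "{t}"] by fastforce
        then show False using \<open>card (component (H' S) t) \<ge> 2\<close> by simp
      qed
      then show ?thesis using that by blast
    qed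
    then have "(adj (H' S))\<^sup>*\<^sup>* t t'" unfolding component_def reachable_def by simp
    then show ?thesis using t'(2) by (metis converse_rtranclpE)
  qed
  have CV: "C \<subseteq> VH" unfolding C_def by auto
  have aC: "a \<in> C" unfolding C_def using ab by simp
  have bC: "b \<notin> C" unfolding C_def using ab by simp
  have nbrX: "\<forall>p\<in>C. \<exists>q\<in>C. ha p q"
  proof
    fix p assume p: "p \<in> C"
    then obtain q where q: "adj (H' S) p q" using step CV by blast
    then have "q \<in> C" using p adjV unfolding C_def by (auto intro: rtranclp.rtrancl_into_rtrancl)
    then show "\<exists>q\<in>C. ha p q" using q adjV by blast
  qed
  have nbrY: "\<forall>p\<in>VH - C. \<exists>q\<in>VH - C. ha p q"
  proof
    fix p assume p: "p \<in> VH - C"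
    then obtain q where q: "adj (H' S) p q" using step by blast
    have "q \<notin> C"
    proof
      assume "q \<in> C"
      then have "(adj (H' S))\<^sup>*\<^sup>* a p"
        unfolding C_def using adjH'_sym[OF q] by (auto intro: rtranclp.rtrancl_into_rtrancl)
      then show False using p unfolding C_def by simp
    qed
    then show "\<exists>q\<in>VH - C. ha p q" using q adjV by blast
  qed
  have "min (2 * min_edge_degree G + 4) (5 * min_degree G + 1) \<le> card (cutH C)"
    by (rule core[OF CV aC ab(2) bC nbrX nbrY hyp])
  moreover have "cutH C \<subseteq> S"
  proof
    fix f assume f: "f \<in> cutH C"
    then have fE: "f \<in> EH" and i: "f \<inter> C \<noteq> {}" and ns: "\<not> f \<subseteq> C" unfolding cutH_def by auto
    obtain p q where pq: "f = {p, q}" using EH_form[OF fE] by blast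
    show "f \<in> S"
    proof (rule ccontr)
      assume nS: "f \<notin> S"
      then have a1: "adj (H' S) p q" "adj (H' S) q p"
        using fE pq adjH' by (auto simp: insert_commute)
      have "p \<in> C \<or> q \<in> C" using i pq by auto
      then have "p \<in> C \<and> q \<in> C"
        using a1 adjV unfolding C_def by (auto intro: rtranclp.rtrancl_into_rtrancl)
      then show False using ns pq by simp
    qed
  qed
  then have "card (cutH C) \<le> card S"
    using SE finEH finite_subset by (intro card_mono) auto
  moreover have "min_edge_degree H \<le> min (2 * min_edge_degree G + 4) (5 * min_degree G + 1)"
  proof -
    have "V \<noteq> {}" using con unfolding connected_def by simp
    then obtain x where x: "x \<in> V" by blast
    obtain y where y: "{x, y} \<in> E" using has_nbr[OF con nt x] by blast
    show ?thesis using xiH_le1[OF y] xiH_le2[OF \<open>V \<noteq> {}\<close>] by simp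
  qed
  ultimately show ?thesis by linarith
qed

lemma main:
  assumes con: "connected G" and nt: "nontrivial G"
    and hyp: "min (2 * min_edge_degree G + 4) (5 * min_degree G + 1) \<le> (3 * n - 2) * edge_connectivity G"
  shows "maximally_restricted_edge_connected H"
proof -
  let ?R = "{card S | S. restricted_edge_cut H S}"
  obtain S0 where S0: "restricted_edge_cut H S0" "card S0 = min_edge_degree H"
    using upper[OF con nt] by blast
  have le: "Inf ?R \<le> min_edge_degree H"
    unfolding Inf_nat_def using S0 by (metis (mono_tags, lifting) Least_le mem_Collect_eq)
  have "?R \<noteq> {}" using S0 by blast
  then have "Inf ?R \<in> ?R" by (rule Inf_nat_def1)
  then obtain S where "restricted_edge_cut H S" "Inf ?R = card S" by blast
  then have ge: "min_edge_degree H \<le> Inf ?R" using lower[OF con nt hyp] by simp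
  show ?thesis unfolding maximally_restricted_edge_connected_def restricted_edge_connectivity_def
    using le ge by simp
qed

end

theorem corollary3p2:
  fixes G :: "'a graph" and n :: nat
  assumes "simple_graph G" and "connected G" and "nontrivial G" and "n \<ge> 2"
    and "min ((3 * n - 2) * edge_connectivity G) (card (verts G) + 2 * num_edges G)
         \<ge> min (2 * min_edge_degree G + 4) (5 * min_degree G + 1)"
  shows "maximally_restricted_edge_connected (strong_product G (path_graph n))"
proof -
  interpret sp G n using assms(1,4) by unfold_locales
  show ?thesis using main[OF assms(2,3)] assms(5) by simp
qed

end
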